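(* Let $n=2$ and $\varphi\in\mathcal{M}$ be a matching. Then there exists a matching mechanism that is resolute, $\langle\varphi\rangle$-symmetric and stable.
   Context: Let $W=\{1,2\}$ (women), $M=\{3,4\}$ (men), $I=W\cup M$. Permutations compose right-to-left. A preference profile is a function $p$ on $I$ assigning to each $x\in W$ a linear order $p(x)$ on $M$ and to each $y\in M$ a linear order $p(y)$ on $W$; $\mathcal{P}$ is the set of preference profiles. A matching is a permutation $\mu$ of $I$ with $\mu(W)=M$, $\mu(M)=W$ and $\mu(\mu(z))=z$ for all $z\in I$; $\mathcal{M}$ is the set of matchings. $\mu$ is stable for $p$ if there is no $(x,y)\in W\times M$ with $y\succ_{p(x)}\mu(x)$ and $x\succ_{p(y)}\mu(y)$. Let $G^*=\{\psi\in\mathrm{Sym}(I):\{\psi(W),\psi(M)\}=\{W,M\}\}$. For a linear order $R$ on $X\subseteq I$ and $\psi\in\mathrm{Sym}(I)$, $\psi R$ is the relation on $\psi(X)$ with $(a,b)\in\psi R$ iff $(\psi^{-1}(a),\psi^{-1}(b))\in R$. For $p\in\mathcal{P}$, $\psi\in G^*$, $p^\psi(z)=\psi\,p(\psi^{-1}(z))$. For a permutation $\mu$, $\mu^\psi=\psi\mu\psi^{-1}$; $S^\psi=\{\mu^\psi:\mu\in S\}$. A matching mechanism is a correspondence $F$ from $\mathcal{P}$ to $\mathcal{M}$; it is resolute if $|F(p)|=1$ for all $p$; stable if every element of $F(p)$ is stable for $p$, for all $p$; for $U\subseteq G^*$ it is $U$-symmetric if $F(p^\psi)=F(p)^\psi$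 for all $p\in\mathcal{P}$, $\psi\in U$. $\langle\varphi\rangle=\{id_I,\varphi\}$. *)

theory Defs
  imports Main "HOL-Combinatorics.Permutations"
begin

definition Wom :: "nat set" where "Wom = {1, 2}"
definition Men :: "nat set" where "Men = {3, 4}"
definition Ind :: "nat set" where "Ind = Wom \<union> Men"

text \<open>A linear order R is a relation with (a,b) in R meaning a is weakly
  preferred to b.\<close>

definition profiles :: "(nat \<Rightarrow> (nat \<times> nat) set) set" where
  "profiles = {p. (\<forall>x\<in>Wom. linear_order_on Men (p x)) \<and>
                  (\<forall>y\<in>Men. linear_order_on Wom (p y)) \<and>
                  (\<forall>z. z \<notin> Ind \<longrightarrow> p z = {})}"

definition spref :: "(nat \<times> nat) set \<Rightarrow> nat \<Rightarrow> nat \<Rightarrow> bool" where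
  "spref R a b \<longleftrightarrow> (a, b) \<in> R \<and> a \<noteq> b"

definition matchings :: "(nat \<Rightarrow> nat) set" where
  "matchings = {\<mu>. \<mu> permutes Ind \<and> \<mu> ` Wom = Men \<and> \<mu> ` Men = Wom \<and>
                   (\<forall>z\<in>Ind. \<mu> (\<mu> z) = z)}"

definition stable_for :: "(nat \<Rightarrow> (nat \<times> nat) set) \<Rightarrow> (nat \<Rightarrow> nat) \<Rightarrow> bool" where
  "stable_for p \<mu> \<longleftrightarrow>
     \<not> (\<exists>x\<in>Wom. \<exists>y\<in>Men. spref (p x) y (\<mu> x) \<and> spref (p y) x (\<mu> y))"

definition Gstar :: "(nat \<Rightarrow> nat) set" where
  "Gstar = {\<psi>. \<psi> permutes Ind \<and> {\<psi> ` Wom, \<psi> ` Men} = {Wom, Men}}"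

definition rel_act :: "(nat \<Rightarrow> nat) \<Rightarrow> (nat \<times> nat) set \<Rightarrow> (nat \<times> nat) set" where
  "rel_act \<psi> R = {(a, b). (inv \<psi> a, inv \<psi> b) \<in> R}"

definition prof_act :: "(nat \<Rightarrow> (nat \<times> nat) set) \<Rightarrow> (nat \<Rightarrow> nat) \<Rightarrow> (nat \<Rightarrow> (nat \<times> nat) set)" where
  "prof_act p \<psi> = (\<lambda>z. rel_act \<psi> (p (inv \<psi> z)))"

definition perm_conj :: "(nat \<Rightarrow> nat) \<Rightarrow> (nat \<Rightarrow> nat) \<Rightarrow> (nat \<Rightarrow> nat)" where
  "perm_conj \<mu> \<psi> = \<psi> \<circ> \<mu> \<circ> inv \<psi>"

definition mechanism :: "((nat \<Rightarrow> (nat \<times> nat) set) \<Rightarrow> (nat \<Rightarrow> nat) set) \<Rightarrow> bool" where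
  "mechanism F \<longleftrightarrow> (\<forall>p\<in>profiles. F p \<subseteq> matchings)"

definition resolute :: "((nat \<Rightarrow> (nat \<times> nat) set) \<Rightarrow> (nat \<Rightarrow> nat) set) \<Rightarrow> bool" where
  "resolute F \<longleftrightarrow> (\<forall>p\<in>profiles. card (F p) = 1)"

definition stable_mech :: "((nat \<Rightarrow> (nat \<times> nat) set) \<Rightarrow> (nat \<Rightarrow> nat) set) \<Rightarrow> bool" where
  "stable_mech F \<longleftrightarrow> (\<forall>p\<in>profiles. \<forall>\<mu>\<in>F p. stable_for p \<mu>)"

definition symmetric_wrt :: "(nat \<Rightarrow> nat) set \<Rightarrow> ((nat \<Rightarrow> (nat \<times> nat) set) \<Rightarrow> (nat \<Rightarrow> nat) set) \<Rightarrow> bool" where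
  "symmetric_wrt U F \<longleftrightarrow>
     (\<forall>p\<in>profiles. \<forall>\<psi>\<in>U. F (prof_act p \<psi>) = (\<lambda>\<mu>. perm_conj \<mu> \<psi>) ` F p)"

end

theory Submission
  imports Defs
begin

definition m1 :: "nat \<Rightarrow> nat" where "m1 = transpose 1 3 \<circ> transpose 2 4"
definition m2 :: "nat \<Rightarrow> nat" where "m2 = transpose 1 4 \<circ> transpose 2 3"

lemma m1_in: "m1 \<in> matchings"
proof -
  have "m1 permutes Ind" unfolding m1_def Ind_def Wom_def Men_def
    by (intro permutes_compose permutes_swap_id) auto
  moreover have "m1 ` Wom = Men" "m1 ` Men = Wom" "\<forall>z\<in>Ind. m1 (m1 z) = z"
    unfolding m1_def Ind_def Wom_def Men_def by (auto simp: transpose_def)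
  ultimately show ?thesis unfolding matchings_def by blast
qed

lemma m2_in: "m2 \<in> matchings"
proof -
  have "m2 permutes Ind" unfolding m2_def Ind_def Wom_def Men_def
    by (intro permutes_compose permutes_swap_id) auto
  moreover have "m2 ` Wom = Men" "m2 ` Men = Wom" "\<forall>z\<in>Ind. m2 (m2 z) = z"
    unfolding m2_def Ind_def Wom_def Men_def by (auto simp: transpose_def)
  ultimately show ?thesis unfolding matchings_def by blast
qed

lemma match_cases:
  assumes "\<phi> \<in> matchings"
  shows "\<phi> = m1 \<or> \<phi> = m2"
proof -
  have perm: "\<phi> permutes Ind" and W: "\<phi> ` Wom = Men" and M: "\<phi> ` Men = Wom"
    and inv: "\<forall>z\<in>Ind. \<phi> (\<phi> z) = z"
    using assms unfolding matchings_def by auto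
  have out: "\<And>z. z \<notin> Ind \<Longrightarrow> \<phi> z = z" using perm by (simp add: permutes_def)
  have inj: "inj \<phi>" using perm permutes_inj by blast
  have i1: "\<phi> (\<phi> 1) = 1" "\<phi> (\<phi> 2) = 2" using inv by (auto simp: Ind_def Wom_def)
  have a: "\<phi> 1 = 3 \<or> \<phi> 1 = 4" "\<phi> 2 = 3 \<or> \<phi> 2 = 4" using W by (auto simp: Wom_def Men_def)
  have ne: "\<phi> 1 \<noteq> \<phi> 2" using inj by (auto dest: injD)
  show ?thesis
  proof (cases "\<phi> 1 = 3")
    case True
    then have "\<phi> 2 = 4" using a ne by auto
    then have "\<phi> z = m1 z" for z using True i1 out[of z]
      by (auto simp: m1_def transpose_def Ind_def Wom_def Men_def)
    then show ?thesis by auto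
  next
    case False
    then have "\<phi> 1 = 4" "\<phi> 2 = 3" using a ne by auto
    then have "\<phi> z = m2 z" for z using i1 out[of z]
      by (auto simp: m2_def transpose_def Ind_def Wom_def Men_def)
    then show ?thesis by auto
  qed
qed

lemma antisym_p: "p \<in> profiles \<Longrightarrow> z \<in> Ind \<Longrightarrow> spref (p z) a b \<Longrightarrow> spref (p z) b a \<Longrightarrow> False"
  unfolding profiles_def spref_def Ind_def linear_order_on_def partial_order_on_def antisym_def
  by blast

lemma exists_stable:
  assumes "p \<in> profiles"
  shows "stable_for p m1 \<or> stable_for p m2"
proof (rule ccontr)
  assume "\<not> ?thesis"
  then obtain x y x' y' where xy: "x \<in> Wom" "y \<in> Men" "spref (p x) y (m1 x)" "spref (p y) x (m1 y)"
    and xy': "x' \<in> Wom" "y' \<in> Men" "spref (p x') y' (m2 x')" "spref (p y') x' (m2 y')"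
    unfolding stable_for_def by blast
  have irr: "\<And>R a. \<not> spref R a a" by (simp add: spref_def)
  have "z \<in> Ind" if "z \<in> {1,2,3,4::nat}" for z using that by (auto simp: Ind_def Wom_def Men_def)
  note A = antisym_p[OF assms this]
  from xy xy' show False
    unfolding Wom_def Men_def
    apply (simp add: m1_def m2_def transpose_def)
    apply (elim disjE)
    using A irr by (auto)
qed

lemma inv_match: "\<mu> \<in> matchings \<Longrightarrow> inv \<mu> = \<mu>"
proof -
  assume a: "\<mu> \<in> matchings"
  then have perm: "\<mu> permutes Ind" and inv: "\<forall>z\<in>Ind. \<mu> (\<mu> z) = z"
    unfolding matchings_def by auto
  have "\<mu> (\<mu> z) = z" for z
    using inv perm by (cases "z \<in> Ind") (auto simp: permutes_def)
  then show ?thesis by (metis inv_equality)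
qed

lemma stable_act:
  assumes "\<phi> \<in> matchings"
  shows "stable_for (prof_act p \<phi>) \<phi> \<longleftrightarrow> stable_for p \<phi>"
proof -
  have iv: "inv \<phi> = \<phi>" using inv_match[OF assms] .
  have perm: "\<phi> permutes Ind" and W: "\<phi> ` Wom = Men" and M: "\<phi> ` Men = Wom"
    and inv: "\<forall>z\<in>Ind. \<phi> (\<phi> z) = z"
    using assms unfolding matchings_def by auto
  have inj: "inj \<phi>" using perm permutes_inj by blast
  have sp: "spref (rel_act \<phi> R) a b \<longleftrightarrow> spref R (\<phi> a) (\<phi> b)" for R a b
    using inj unfolding spref_def rel_act_def iv by (auto dest: injD)
  have ii: "\<phi> (\<phi> z) = z" for z using iv by (metis assms inv_match inv_f_f perm permutes_inj)
  have "(\<exists>x\<in>Wom. \<exists>y\<in>Men. spref (prof_act p \<phi> x) y (\<phi> x) \<and> spref (prof_act p \<phi> y) x (\<phi> y))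
      \<longleftrightarrow> (\<exists>x\<in>Wom. \<exists>y\<in>Men. spref (p x) y (\<phi> x) \<and> spref (p y) x (\<phi> y))"
  proof
    assume "\<exists>x\<in>Wom. \<exists>y\<in>Men. spref (prof_act p \<phi> x) y (\<phi> x) \<and> spref (prof_act p \<phi> y) x (\<phi> y)"
    then obtain x y where "x\<in>Wom" "y\<in>Men" "spref (p (\<phi> x)) (\<phi> y) x" "spref (p (\<phi> y)) (\<phi> x) y"
      unfolding prof_act_def iv sp ii by auto
    then show "\<exists>x\<in>Wom. \<exists>y\<in>Men. spref (p x) y (\<phi> x) \<and> spref (p y) x (\<phi> y)"
      using W M ii by (metis imageI)
  next
    assume "\<exists>x\<in>Wom. \<exists>y\<in>Men. spref (p x) y (\<phi> x) \<and> spref (p y) x (\<phi> y)"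
    then obtain x y where h: "x\<in>Wom" "y\<in>Men" "spref (p x) y (\<phi> x)" "spref (p y) x (\<phi> y)" by auto
    have "\<phi> y \<in> Wom" "\<phi> x \<in> Men" using h W M by auto
    moreover have "spref (prof_act p \<phi> (\<phi> y)) (\<phi> x) (\<phi> (\<phi> y))"
       "spref (prof_act p \<phi> (\<phi> x)) (\<phi> y) (\<phi> (\<phi> x))"
      unfolding prof_act_def iv sp ii using h by auto
    ultimately show "\<exists>x\<in>Wom. \<exists>y\<in>Men. spref (prof_act p \<phi> x) y (\<phi> x) \<and> spref (prof_act p \<phi> y) x (\<phi> y)"
      by blast
  qed
  then show ?thesis unfolding stable_for_def by simp
qed

lemma conj_m: "perm_conj m1 m1 = m1" "perm_conj m1 m2 = m1" "perm_conj m2 m1 = m2" "perm_conj m2 m2 = m2"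
  unfolding perm_conj_def inv_match[OF m1_in] inv_match[OF m2_in]
  by (auto simp: m1_def m2_def transpose_def fun_eq_iff)

lemma prof_id: "prof_act p id = p"
  unfolding prof_act_def rel_act_def by simp

lemma conj_id: "perm_conj \<mu> id = \<mu>"
  unfolding perm_conj_def by simp

theorem theorem7:
  assumes "\<phi> \<in> matchings"
  shows "\<exists>F. mechanism F \<and> resolute F \<and> symmetric_wrt {id, \<phi>} F \<and> stable_mech F"
proof -
  define \<sigma> where "\<sigma> = (if \<phi> = m1 then m2 else m1)"
  have ph: "\<phi> = m1 \<or> \<phi> = m2" using match_cases[OF assms] .
  have sig: "\<sigma> \<in> matchings" using m1_in m2_in by (simp add: \<sigma>_def)
  have st: "p \<in> profiles \<Longrightarrow> stable_for p \<phi> \<or> stable_for p \<sigma>" for p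
    using exists_stable[of p] ph by (auto simp: \<sigma>_def)
  have cs: "perm_conj \<sigma> \<phi> = \<sigma>" "perm_conj \<phi> \<phi> = \<phi>" using ph conj_m by (auto simp: \<sigma>_def)
  define F where "F p = {if stable_for p \<phi> then \<phi> else \<sigma>}" for p
  have "mechanism F" unfolding mechanism_def F_def using assms sig by auto
  moreover have "resolute F" unfolding resolute_def F_def by auto
  moreover have "symmetric_wrt {id, \<phi>} F"
    unfolding symmetric_wrt_def
  proof (intro ballI)
    fix p \<psi> assume "p \<in> profiles" "\<psi> \<in> {id, \<phi>}"
    then consider "\<psi> = id" | "\<psi> = \<phi>" by auto
    then show "F (prof_act p \<psi>) = (\<lambda>\<mu>. perm_conj \<mu> \<psi>) ` F p"
    proof cases
      case 1 then show ?thesis by (simp add: prof_id conj_id)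
    next
      case 2 then show ?thesis unfolding F_def using stable_act[OF assms, of p] cs by auto
    qed
  qed
  moreover have "stable_mech F" unfolding stable_mech_def F_def using st by auto
  ultimately show ?thesis by blast
qed

end
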